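(* Let $a\in[-1,1)$. Let $M_2=\big(\int_{-1}^1t^{i+j}\,dt\big)_{0\le i,j\le2}$ and $v_a^{(2)}=\big(1-a,\ \tfrac{1-a^2}{2},\ \tfrac{1-a^3}{3}\big)^\top$. Then the linear equation $M_2x=v_a^{(2)}$ has a solution $x\in(0,\infty)^3$ if and only if $0<a<\frac{\sqrt{105}-5}{10}$. *)

theory Defs
  imports "HOL-Analysis.Analysis"
begin

definition Mmat :: "nat \<Rightarrow> nat \<Rightarrow> real" where
  "Mmat i j = integral {-1..1} (\<lambda>t::real. t ^ (i + j))"

definition vvec :: "real \<Rightarrow> nat \<Rightarrow> real" where
  "vvec a i = (1 - a ^ (i + 1)) / real (i + 1)"

end

theory Submission
  imports Defs
begin

lemma Mmat_eq: "Mmat i j = (1 - (-1::real)^Suc (i+j)) / real (Suc (i+j))"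
proof -
  have "((\<lambda>t::real. t ^ (i + j)) has_integral
          ((1::real)^Suc (i+j) / Suc (i+j) - (-1)^Suc (i+j) / Suc (i+j))) {-1..1}"
    apply (rule fundamental_theorem_of_calculus)
     apply simp
  proof -
    fix t :: real
    assume "t \<in> {-1..1}"
    have "((\<lambda>t::real. t ^ Suc (i+j) / Suc (i+j)) has_real_derivative t ^ (i+j)) (at t)"
      by (rule derivative_eq_intros refl | simp)+
    then show "((\<lambda>t::real. t ^ Suc (i+j) / Suc (i+j)) has_vector_derivative t ^ (i+j)) (at t within {-1..1})"
      unfolding has_real_derivative_iff_has_vector_derivative[symmetric]
      using DERIV_subset by blast
  qed
  then show ?thesis unfolding Mmat_def
    by (simp add: integral_unique add_divide_distrib)
qed

lemma M00: "Mmat 0 0 = 2" by (simp add: Mmat_eq)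
lemma M01: "Mmat 0 1 = 0" by (simp add: Mmat_eq)
lemma M02: "Mmat 0 2 = 2/3" by (simp add: Mmat_eq)
lemma M10: "Mmat 1 0 = 0" by (simp add: Mmat_eq)
lemma M11: "Mmat 1 1 = 2/3" by (simp add: Mmat_eq)
lemma M12: "Mmat 1 2 = 0" by (simp add: Mmat_eq)
lemma M20: "Mmat 2 0 = 2/3" by (simp add: Mmat_eq)
lemma M21: "Mmat 2 1 = 0" by (simp add: Mmat_eq)
lemma M22: "Mmat 2 2 = 2/5" by (simp add: Mmat_eq)

lemma sqrt_cond:
  fixes a :: real assumes "0 < a"
  shows "a < (sqrt 105 - 5) / 10 \<longleftrightarrow> 5*a^2 + 5*a - 4 < 0"
proof -
  have s: "sqrt 105 ^ 2 = 105" by simp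
  have sp: "sqrt 105 > 0" by simp
  have "a < (sqrt 105 - 5) / 10 \<longleftrightarrow> 10*a + 5 < sqrt 105" by auto
  also have "\<dots> \<longleftrightarrow> (10*a+5)^2 < sqrt 105 ^ 2"
    using assms sp by (smt (verit) power_mono power_strict_mono real_less_rsqrt real_sqrt_abs real_sqrt_less_iff zero_le_power2)
  also have "\<dots> \<longleftrightarrow> 5*a^2 + 5*a - 4 < 0" unfolding s by (simp add: power2_eq_square algebra_simps) linarith
  finally show ?thesis .
qed

theorem lemma4p1:
  fixes a :: real
  assumes "-1 \<le> a" and "a < 1"
  shows "(\<exists>x :: nat \<Rightarrow> real. (\<forall>j\<le>2. x j > 0) \<and>
            (\<forall>i\<le>2. (\<Sum>j\<le>2. Mmat i j * x j) = vvec a i))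
         \<longleftrightarrow> (0 < a \<and> a < (sqrt 105 - 5) / 10)"
proof -
  have sum3: "\<And>f::nat\<Rightarrow>real. (\<Sum>j\<le>2. f j) = f 0 + f 1 + f 2"
    by (simp add: numeral_2_eq_2)
  have all3: "\<And>P. (\<forall>j\<le>(2::nat). P j) \<longleftrightarrow> P 0 \<and> P 1 \<and> P 2"
    by (auto simp: numeral_2_eq_2 le_Suc_eq)
  have eqs: "(\<forall>i\<le>2. (\<Sum>j\<le>2. Mmat i j * x j) = vvec a i) \<longleftrightarrow>
      (2 * x 0 + 2/3 * x 2 = 1 - a \<and> 2/3 * x 1 = (1 - a^2)/2 \<and> 2/3 * x 0 + 2/5 * x 2 = (1 - a^3)/3)"
    for x
    unfolding all3 sum3 by (simp add: Mmat_eq vvec_def power2_eq_square)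
  have solve: "(2 * x 0 + 2/3 * x 2 = 1 - a \<and> 2/3 * x 1 = (1 - a^2)/2 \<and> 2/3 * x 0 + 2/5 * x 2 = (1 - a^3)/3)
     \<longleftrightarrow> (x 0 = (1-a)*(4 - 5*a*(1+a))/8 \<and> x 1 = 3*(1-a^2)/4 \<and> x 2 = 15*(a-a^3)/8)" for x :: "nat \<Rightarrow> real"
    by (auto simp: algebra_simps power2_eq_square power3_eq_cube)
  show ?thesis
  proof
    assume "\<exists>x. (\<forall>j\<le>2. x j > 0) \<and> (\<forall>i\<le>2. (\<Sum>j\<le>2. Mmat i j * x j) = vvec a i)"
    then obtain x where p: "x 0 > 0" "x 1 > 0" "x 2 > 0" and e: "(\<forall>i\<le>2. (\<Sum>j\<le>2. Mmat i j * x j) = vvec a i)"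
      unfolding all3 by blast
    from e[unfolded eqs solve] have x: "x 0 = (1-a)*(4 - 5*a*(1+a))/8" "x 2 = 15*(a-a^3)/8" by auto
    have "a*(1-a)*(1+a) > 0" using p(3) x(2) by (simp add: algebra_simps power3_eq_cube)
    hence a0: "0 < a" using assms
      by (smt (verit) mult_nonneg_nonneg mult_nonpos_nonneg)
    have "(1-a)*(4 - 5*a*(1+a)) > 0" using p(1) x(1) by simp
    hence "4 - 5*a*(1+a) > 0" using assms
      by (smt (verit) mult_nonneg_nonpos)
    thus "0 < a \<and> a < (sqrt 105 - 5) / 10" using a0 sqrt_cond[OF a0]
      by (simp add: algebra_simps power2_eq_square)
  next
    assume h: "0 < a \<and> a < (sqrt 105 - 5) / 10"
    hence q: "5*a^2 + 5*a - 4 < 0" using sqrt_cond by blast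
    define x :: "nat \<Rightarrow> real" where "x = (\<lambda>j. if j = 0 then (1-a)*(4 - 5*a*(1+a))/8
       else if j = 1 then 3*(1-a^2)/4 else 15*(a-a^3)/8)"
    have "4 - 5*a*(1+a) > 0" using q by (simp add: algebra_simps power2_eq_square)
    hence x0: "x 0 > 0" using assms unfolding x_def by simp
    have aa: "a*a < 1*1" using h assms by (intro mult_strict_mono) auto
    moreover have "x 1 > 0" using aa unfolding x_def by (simp add: power2_eq_square)
    moreover have "x 2 > 0"
    proof -
      have "a * (1 - a*a) > 0" using aa h by simp
      thus ?thesis unfolding x_def by (simp add: power3_eq_cube algebra_simps)
    qed
    moreover have "(\<forall>i\<le>2. (\<Sum>j\<le>2. Mmat i j * x j) = vvec a i)"
      unfolding eqs solve by (simp add: x_def)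
    ultimately show "\<exists>x. (\<forall>j\<le>2. x j > 0) \<and> (\<forall>i\<le>2. (\<Sum>j\<le>2. Mmat i j * x j) = vvec a i)"
      using x0 unfolding all3 by blast
  qed
qed

end
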